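(* Let $F:\mathbb{R}^n\to\mathbb{R}$ be a convex differentiable function and assume there exists a minimizer $x_*$ of $F$. Let $\xi^{(1)},\dots,\xi^{(T)}$ be i.i.d. random variables. Let $\mu_x,\mu_y\in[0,1)$, and let $z^{(1)},\dots,z^{(T)}$ be arbitrary (random) iterates produced by a base optimizer, with the Generalized Primal Averaging sequences defined by $x^{(1)}=z^{(1)}$ and $$y^{(t)}=\mu_y x^{(t)}+(1-\mu_y)z^{(t)},\qquad x^{(t+1)}=\mu_x x^{(t)}+(1-\mu_x)z^{(t+1)}.$$ Let $\bar{x}^{(T)}=\frac1T\sum_{t=1}^T x^{(t)}$. Then $$\mathbb{E}[F(\bar{x}^{(T)})-F(x_* )]\le \frac1T\sum_{t=1}^T\mathbb{E}[\langle\nabla F(y^{(t)}),z^{(t)}-x_*\rangle]+\frac{\mu_x}{1-\mu_x}\frac1T\mathbb{E}[F(x^{(1)})-F(x_* )]$$ $$-\frac{1}{1-\mu_y}\frac1T\sum_{t=1}^T\mathbb{E}[B_F(y^{(t)},x^{(t)})]-\frac{\mu_y}{1-\mu_y}\frac1T\sum_{t=1}^T\mathbb{E}[B_F(x^{(t)},y^{(t)})]-\frac{\mu_x}{1-\mu_x}\frac1T\sum_{t=1}^T\mathbb{E}[B_F(x^{(t-1)},x^{(t)})],$$ with the convention $x^{(0)}:=x^{(1)}$.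
   Context: $B_F(a,b)=F(a)-F(b)-\langle\nabla F(b),a-b\rangle$ denotes the Bregman divergence of $F$, for $a,b\in\mathbb{R}^n$. The iterates $z^{(t)}$ are random (depending on the samples $\xi^{(t)}$) and all expectations are assumed finite. *)

theory Defs
  imports "HOL-Probability.Probability"
begin

definition bregman :: "('a::euclidean_space \<Rightarrow> real) \<Rightarrow> ('a \<Rightarrow> 'a) \<Rightarrow> 'a \<Rightarrow> 'a \<Rightarrow> real" where
  "bregman F gF a b = F a - F b - gF b \<bullet> (a - b)"

text \<open>Generalized Primal Averaging x-sequence, indexed from 1:
  x 1 = z 1,  x (t+1) = mu_x x t + (1 - mu_x) z (t+1); convention x 0 := x 1.\<close>
fun gpa_x :: "real \<Rightarrow> (nat \<Rightarrow> 'a::real_vector) \<Rightarrow> nat \<Rightarrow> 'a" where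
  "gpa_x mu z 0 = z 1"
| "gpa_x mu z (Suc t) =
     (if t = 0 then z 1 else mu *\<^sub>R gpa_x mu z t + (1 - mu) *\<^sub>R z (Suc t))"

definition gpa_y :: "real \<Rightarrow> real \<Rightarrow> (nat \<Rightarrow> 'a::real_vector) \<Rightarrow> nat \<Rightarrow> 'a" where
  "gpa_y mux muy z t = muy *\<^sub>R gpa_x mux z t + (1 - muy) *\<^sub>R z t"

end

theory Submission
  imports Defs
begin

lemma grad_ineq:
  fixes F :: "'a::euclidean_space \<Rightarrow> real"
  assumes cvx: "convex_on UNIV F"
    and grad: "\<And>x. (F has_derivative (\<lambda>h. gradF x \<bullet> h)) (at x)"
  shows "F x \<ge> F y + gradF y \<bullet> (x - y)"
proof -
  define d where "d = x - y"
  define \<phi> where "\<phi> = (\<lambda>t::real. F (y + t *\<^sub>R d))"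
  have cphi: "convex_on UNIV \<phi>"
  proof (rule convex_onI)
    fix t a b :: real assume "0 < t" "t < 1"
    have "y + ((1 - t) * a + t * b) *\<^sub>R d = (1 - t) *\<^sub>R (y + a *\<^sub>R d) + t *\<^sub>R (y + b *\<^sub>R d)"
      by (simp add: algebra_simps)
    then show "\<phi> ((1 - t) *\<^sub>R a + t *\<^sub>R b) \<le> (1 - t) * \<phi> a + t * \<phi> b"
      unfolding \<phi>_def using cvx \<open>0 < t\<close> \<open>t < 1\<close>
      by (simp add: convex_on_def)
  qed simp
  have "((\<lambda>t::real. y + t *\<^sub>R d) has_derivative (\<lambda>t. t *\<^sub>R d)) (at 0)"
    by (auto intro!: derivative_eq_intros)
  from has_derivative_compose[OF this grad[of "y + 0 *\<^sub>R d"]]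
  have "(\<phi> has_derivative (\<lambda>t. gradF y \<bullet> (t *\<^sub>R d))) (at 0)"
    by (simp add: \<phi>_def o_def)
  hence "(\<phi> has_field_derivative (gradF y \<bullet> d)) (at 0 within UNIV)"
    unfolding has_field_derivative_def by (simp add: mult.commute[of _ "gradF y \<bullet> d"])
  from convex_on_imp_above_tangent[OF cphi _ _ _ this, of 1]
  have "\<phi> 1 - \<phi> 0 \<ge> gradF y \<bullet> d" by simp
  thus ?thesis by (simp add: \<phi>_def d_def)
qed

lemma step_ineq:
  fixes F :: "'a::euclidean_space \<Rightarrow> real"
  assumes ge: "F xs \<ge> F y + g y \<bullet> (xs - y)"
    and hz: "c *\<^sub>R (x - xp) = zt - x"
    and hy: "y = muy *\<^sub>R x + (1 - muy) *\<^sub>R zt"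
    and muy: "muy < 1"
  shows "F x - F xs \<le> g y \<bullet> (zt - xs) + c * (F xp - F x)
     - 1 / (1 - muy) * bregman F g y x - muy / (1 - muy) * bregman F g x y
     - c * bregman F g xp x"
proof -
  have h1: "c * (g x \<bullet> (xp - x)) = - (g x \<bullet> (zt - x))"
    using arg_cong[OF hz, of "\<lambda>v. g x \<bullet> v"] by (simp add: inner_diff_right algebra_simps)
  have h2: "g x \<bullet> (y - x) = (1 - muy) * (g x \<bullet> (zt - x))"
    unfolding hy by (simp add: inner_diff_right inner_add_right algebra_simps)
  have h3: "g y \<bullet> (x - y) = (1 - muy) * (g y \<bullet> (x - zt))"
    unfolding hy by (simp add: inner_diff_right inner_add_right algebra_simps)
  have h4: "g y \<bullet> (zt - xs) = g y \<bullet> (y - xs) + muy * (g y \<bullet> (zt - x))"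
    unfolding hy by (simp add: inner_diff_right inner_add_right algebra_simps)
  have h5: "g y \<bullet> (x - zt) = - (g y \<bullet> (zt - x))"
    by (simp add: inner_diff_right)
  have h6: "g y \<bullet> (xs - y) = - (g y \<bullet> (y - xs))"
    by (simp add: inner_diff_right)
  have e1: "c * bregman F g xp x = c * (F xp - F x) + g x \<bullet> (zt - x)"
    unfolding bregman_def using h1 by (simp add: algebra_simps)
  have e2: "1 / (1 - muy) * bregman F g y x = (F y - F x) / (1 - muy) - g x \<bullet> (zt - x)"
    unfolding bregman_def h2 using muy by (simp add: field_simps)
  have e3: "muy / (1 - muy) * bregman F g x y = muy / (1 - muy) * (F x - F y) + muy * (g y \<bullet> (zt - x))"
    unfolding bregman_def h3 h5 using muy by (simp add: field_simps)
  have e4a: "(F y - F x) / (1 - muy) + muy / (1 - muy) * (F x - F y) = ((1 - muy) * (F y - F x)) / (1 - muy)"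
    by (simp add: add_divide_distrib[symmetric] algebra_simps)
  have e4: "(F y - F x) / (1 - muy) + muy / (1 - muy) * (F x - F y) = F y - F x"
    unfolding e4a using muy by simp
  show ?thesis unfolding e1 e3 e2 h4 using ge h6 e4 by linarith
qed

lemma telesc: "(\<Sum>t=1..(T::nat). (f (t - 1) - f t :: real)) = f 0 - f T"
  by (induction T) (simp_all add: sum.cl_ivl_Suc)

lemma gpa_hz:
  assumes "1 \<le> t" "mux < 1"
  shows "(mux / (1 - mux)) *\<^sub>R (gpa_x mux zz t - gpa_x mux zz (t - 1)) = zz t - gpa_x mux zz t"
proof (cases "t = 1")
  case True then show ?thesis by (simp add: numeral_eq_Suc)
next
  case False
  then obtain s where s: "t = Suc s" "s \<noteq> 0" using assms by (cases t) auto
  have xt: "gpa_x mux zz t = mux *\<^sub>R gpa_x mux zz s + (1 - mux) *\<^sub>R zz t"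
    using s by simp
  have d: "gpa_x mux zz t - gpa_x mux zz s = (1 - mux) *\<^sub>R (zz t - gpa_x mux zz s)"
    unfolding xt by (simp add: algebra_simps)
  have "(mux / (1 - mux)) *\<^sub>R (gpa_x mux zz t - gpa_x mux zz s)
      = (mux / (1 - mux) * (1 - mux)) *\<^sub>R (zz t - gpa_x mux zz s)"
    unfolding d by simp
  also have "\<dots> = mux *\<^sub>R (zz t - gpa_x mux zz s)" using assms by simp
  also have "\<dots> = zz t - gpa_x mux zz t" unfolding xt by (simp add: algebra_simps)
  finally show ?thesis using s by simp
qed

lemma det_ineq:
  fixes F :: "'a::euclidean_space \<Rightarrow> real" and zz :: "nat \<Rightarrow> 'a"
  assumes cvx: "convex_on UNIV F"
    and grad: "\<And>x. (F has_derivative (\<lambda>h. gradF x \<bullet> h)) (at x)"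
    and minim: "\<And>x. F xstar \<le> F x"
    and mux: "0 \<le> mux" "mux < 1" and muy: "0 \<le> muy" "muy < 1"
    and T: "1 \<le> T"
  shows "F ((1 / real T) *\<^sub>R (\<Sum>t=1..T. gpa_x mux zz t)) - F xstar
    \<le> (1 / real T) * (\<Sum>t=1..T. gradF (gpa_y mux muy zz t) \<bullet> (zz t - xstar))
     + mux / (1 - mux) * (1 / real T) * (F (gpa_x mux zz 1) - F xstar)
     - 1 / (1 - muy) * (1 / real T) * (\<Sum>t=1..T.
          bregman F gradF (gpa_y mux muy zz t) (gpa_x mux zz t))
     - muy / (1 - muy) * (1 / real T) * (\<Sum>t=1..T.
          bregman F gradF (gpa_x mux zz t) (gpa_y mux muy zz t))
     - mux / (1 - mux) * (1 / real T) * (\<Sum>t=1..T.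
          bregman F gradF (gpa_x mux zz (t - 1)) (gpa_x mux zz t))"
proof -
  define c where "c = mux / (1 - mux)"
  have c0: "c \<ge> 0" unfolding c_def using mux by simp
  let ?x = "gpa_x mux zz" and ?y = "gpa_y mux muy zz"
  define lin where "lin t = gradF (?y t) \<bullet> (zz t - xstar)" for t
  define B1 where "B1 t = bregman F gradF (?y t) (?x t)" for t
  define B2 where "B2 t = bregman F gradF (?x t) (?y t)" for t
  define B3 where "B3 t = bregman F gradF (?x (t - 1)) (?x t)" for t
  define fx where "fx t = F (?x t)" for t
  have stp: "fx t - F xstar \<le> lin t + c * (fx (t - 1) - fx t) - 1 / (1 - muy) * B1 t
      - muy / (1 - muy) * B2 t - c * B3 t" if "t \<in> {1..T}" for t
    unfolding lin_def fx_def B1_def B2_def B3_def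
    apply (rule step_ineq[where c = c])
    using grad_ineq[OF cvx grad] apply blast
    using gpa_hz[of t mux zz] that mux unfolding c_def apply simp
    apply (simp add: gpa_y_def)
    using muy by simp
  have sum1: "(\<Sum>t=1..T. fx t - F xstar) \<le> (\<Sum>t=1..T. lin t + c * (fx (t - 1) - fx t) - 1 / (1 - muy) * B1 t
      - muy / (1 - muy) * B2 t - c * B3 t)"
    by (rule sum_mono) (rule stp)
  also have "\<dots> = (\<Sum>t=1..T. lin t) + c * (fx 0 - fx T) - 1 / (1 - muy) * (\<Sum>t=1..T. B1 t)
      - muy / (1 - muy) * (\<Sum>t=1..T. B2 t) - c * (\<Sum>t=1..T. B3 t)"
    using telesc[of fx T] by (simp only: sum.distrib sum_subtractf sum_distrib_left[symmetric])
  also have "\<dots> \<le> (\<Sum>t=1..T. lin t) + c * (fx 1 - F xstar) - 1 / (1 - muy) * (\<Sum>t=1..T. B1 t)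
      - muy / (1 - muy) * (\<Sum>t=1..T. B2 t) - c * (\<Sum>t=1..T. B3 t)"
  proof -
    have "fx 0 = fx 1" unfolding fx_def by (simp add: numeral_eq_Suc)
    moreover have "fx T \<ge> F xstar" unfolding fx_def by (rule minim)
    ultimately have "c * (fx 0 - fx T) \<le> c * (fx 1 - F xstar)"
      using c0 by (simp add: mult_left_mono)
    thus ?thesis by linarith
  qed
  finally have S: "(\<Sum>t=1..T. fx t - F xstar) \<le> \<dots>" .
  have Tpos: "real T > 0" using T by simp
  have jen: "F ((1 / real T) *\<^sub>R (\<Sum>t=1..T. ?x t)) \<le> (\<Sum>t=1..T. (1 / real T) * fx t)"
    unfolding scaleR_sum_right fx_def
    by (rule convex_on_sum[OF _ _ cvx]) (use T in auto)
  also have "\<dots> = (1 / real T) * (\<Sum>t=1..T. fx t - F xstar) + F xstar"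
    using Tpos by (simp add: sum_distrib_left[symmetric] sum_subtractf sum_divide_distrib[symmetric] diff_divide_distrib)
  finally have "F ((1 / real T) *\<^sub>R (\<Sum>t=1..T. ?x t)) - F xstar \<le> (1 / real T) * (\<Sum>t=1..T. fx t - F xstar)"
    by simp
  also have "\<dots> \<le> (1 / real T) * ((\<Sum>t=1..T. lin t) + c * (fx 1 - F xstar) - 1 / (1 - muy) * (\<Sum>t=1..T. B1 t)
      - muy / (1 - muy) * (\<Sum>t=1..T. B2 t) - c * (\<Sum>t=1..T. B3 t))"
    using S Tpos by (intro mult_left_mono) auto
  also have "\<dots> = (1 / real T) * (\<Sum>t=1..T. lin t) + c * (1 / real T) * (fx 1 - F xstar)
      - 1 / (1 - muy) * (1 / real T) * (\<Sum>t=1..T. B1 t)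
      - muy / (1 - muy) * (1 / real T) * (\<Sum>t=1..T. B2 t) - c * (1 / real T) * (\<Sum>t=1..T. B3 t)"
    by (simp only: ring_distribs mult_ac)
  finally show ?thesis
    unfolding lin_def B1_def B2_def B3_def fx_def c_def .
qed

theorem theorem1:
  fixes M :: "'w measure" and N :: "'b measure"
    and F :: "'a::euclidean_space \<Rightarrow> real" and gradF :: "'a \<Rightarrow> 'a"
    and xstar :: 'a and xi :: "nat \<Rightarrow> 'w \<Rightarrow> 'b" and z :: "nat \<Rightarrow> 'w \<Rightarrow> 'a"
    and mux muy :: real and T :: nat
  assumes P: "prob_space M"
    and cvx: "convex_on UNIV F"
    and grad: "\<And>x. (F has_derivative (\<lambda>h. gradF x \<bullet> h)) (at x)"
    and minim: "\<And>x. F xstar \<le> F x"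
    and xi_rv: "\<And>t. t \<in> {1..T} \<Longrightarrow> xi t \<in> measurable M N"
    and xi_indep: "prob_space.indep_vars M (\<lambda>_. N) xi {1..T}"
    and xi_ident: "\<And>t. t \<in> {1..T} \<Longrightarrow> distr M N (xi t) = distr M N (xi 1)"
    and mux: "0 \<le> mux" "mux < 1" and muy: "0 \<le> muy" "muy < 1"
    and T: "1 \<le> T"
    and z_rv: "\<And>t. t \<in> {1..T} \<Longrightarrow> z t \<in> borel_measurable M"
    and int_avg: "integrable M (\<lambda>\<omega>. F ((1 / real T) *\<^sub>R (\<Sum>t=1..T. gpa_x mux (\<lambda>s. z s \<omega>) t)) - F xstar)"
    and int_lin: "\<And>t. t \<in> {1..T} \<Longrightarrow>
       integrable M (\<lambda>\<omega>. gradF (gpa_y mux muy (\<lambda>s. z s \<omega>) t) \<bullet> (z t \<omega> - xstar))"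
    and int_x1: "integrable M (\<lambda>\<omega>. F (gpa_x mux (\<lambda>s. z s \<omega>) 1) - F xstar)"
    and int_b1: "\<And>t. t \<in> {1..T} \<Longrightarrow>
       integrable M (\<lambda>\<omega>. bregman F gradF (gpa_y mux muy (\<lambda>s. z s \<omega>) t) (gpa_x mux (\<lambda>s. z s \<omega>) t))"
    and int_b2: "\<And>t. t \<in> {1..T} \<Longrightarrow>
       integrable M (\<lambda>\<omega>. bregman F gradF (gpa_x mux (\<lambda>s. z s \<omega>) t) (gpa_y mux muy (\<lambda>s. z s \<omega>) t))"
    and int_b3: "\<And>t. t \<in> {1..T} \<Longrightarrow>
       integrable M (\<lambda>\<omega>. bregman F gradF (gpa_x mux (\<lambda>s. z s \<omega>) (t - 1)) (gpa_x mux (\<lambda>s. z s \<omega>) t))"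
  shows "(\<integral>\<omega>. F ((1 / real T) *\<^sub>R (\<Sum>t=1..T. gpa_x mux (\<lambda>s. z s \<omega>) t)) - F xstar \<partial>M)
    \<le> (1 / real T) * (\<Sum>t=1..T. \<integral>\<omega>. gradF (gpa_y mux muy (\<lambda>s. z s \<omega>) t) \<bullet> (z t \<omega> - xstar) \<partial>M)
     + mux / (1 - mux) * (1 / real T) * (\<integral>\<omega>. F (gpa_x mux (\<lambda>s. z s \<omega>) 1) - F xstar \<partial>M)
     - 1 / (1 - muy) * (1 / real T) * (\<Sum>t=1..T. \<integral>\<omega>.
          bregman F gradF (gpa_y mux muy (\<lambda>s. z s \<omega>) t) (gpa_x mux (\<lambda>s. z s \<omega>) t) \<partial>M)
     - muy / (1 - muy) * (1 / real T) * (\<Sum>t=1..T. \<integral>\<omega>.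
          bregman F gradF (gpa_x mux (\<lambda>s. z s \<omega>) t) (gpa_y mux muy (\<lambda>s. z s \<omega>) t) \<partial>M)
     - mux / (1 - mux) * (1 / real T) * (\<Sum>t=1..T. \<integral>\<omega>.
          bregman F gradF (gpa_x mux (\<lambda>s. z s \<omega>) (t - 1)) (gpa_x mux (\<lambda>s. z s \<omega>) t) \<partial>M)"
proof -
  interpret prob_space M using P .
  let ?x = "\<lambda>\<omega> t. gpa_x mux (\<lambda>s. z s \<omega>) t" and ?y = "\<lambda>\<omega> t. gpa_y mux muy (\<lambda>s. z s \<omega>) t"
  have iL: "integrable M (\<lambda>\<omega>. (\<Sum>t=1..T. gradF (?y \<omega> t) \<bullet> (z t \<omega> - xstar)))"
    by (rule Bochner_Integration.integrable_sum) (use int_lin in auto)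
  have i1: "integrable M (\<lambda>\<omega>. (\<Sum>t=1..T. bregman F gradF (?y \<omega> t) (?x \<omega> t)))"
    by (rule Bochner_Integration.integrable_sum) (use int_b1 in auto)
  have i2: "integrable M (\<lambda>\<omega>. (\<Sum>t=1..T. bregman F gradF (?x \<omega> t) (?y \<omega> t)))"
    by (rule Bochner_Integration.integrable_sum) (use int_b2 in auto)
  have i3: "integrable M (\<lambda>\<omega>. (\<Sum>t=1..T. bregman F gradF (?x \<omega> (t - 1)) (?x \<omega> t)))"
    by (rule Bochner_Integration.integrable_sum) (use int_b3 in auto)
  have ix: "integrable M (\<lambda>\<omega>. F (?x \<omega> 1))"
    using Bochner_Integration.integrable_add[OF int_x1 integrable_const[of "F xstar"]] by simp
  have "(\<integral>\<omega>. F ((1 / real T) *\<^sub>R (\<Sum>t=1..T. ?x \<omega> t)) - F xstar \<partial>M)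
    \<le> (\<integral>\<omega>. (1 / real T) * (\<Sum>t=1..T. gradF (?y \<omega> t) \<bullet> (z t \<omega> - xstar))
     + mux / (1 - mux) * (1 / real T) * (F (?x \<omega> 1) - F xstar)
     - 1 / (1 - muy) * (1 / real T) * (\<Sum>t=1..T. bregman F gradF (?y \<omega> t) (?x \<omega> t))
     - muy / (1 - muy) * (1 / real T) * (\<Sum>t=1..T. bregman F gradF (?x \<omega> t) (?y \<omega> t))
     - mux / (1 - mux) * (1 / real T) * (\<Sum>t=1..T. bregman F gradF (?x \<omega> (t - 1)) (?x \<omega> t)) \<partial>M)"
    apply (rule integral_mono[OF int_avg])
    subgoal using iL i1 i2 i3 ix by (intro integrable_const Bochner_Integration.integrable_diff Bochner_Integration.integrable_add integrable_mult_right)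
    subgoal for \<omega> by (rule det_ineq[OF cvx grad minim mux muy T])
    done
  also have "\<dots> = (1 / real T) * (\<Sum>t=1..T. \<integral>\<omega>. gradF (?y \<omega> t) \<bullet> (z t \<omega> - xstar) \<partial>M)
     + mux / (1 - mux) * (1 / real T) * (\<integral>\<omega>. F (?x \<omega> 1) - F xstar \<partial>M)
     - 1 / (1 - muy) * (1 / real T) * (\<Sum>t=1..T. \<integral>\<omega>. bregman F gradF (?y \<omega> t) (?x \<omega> t) \<partial>M)
     - muy / (1 - muy) * (1 / real T) * (\<Sum>t=1..T. \<integral>\<omega>. bregman F gradF (?x \<omega> t) (?y \<omega> t) \<partial>M)
     - mux / (1 - mux) * (1 / real T) * (\<Sum>t=1..T. \<integral>\<omega>. bregman F gradF (?x \<omega> (t - 1)) (?x \<omega> t) \<partial>M)"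
    apply (rule has_bochner_integral_integral_eq)
    apply (rule has_bochner_integral_diff)+
    apply (rule has_bochner_integral_add)
    subgoal by (rule has_bochner_integral_mult_right, rule has_bochner_integral_sum,
          rule has_bochner_integral_integrable) (use int_lin in auto)
    subgoal by (rule has_bochner_integral_mult_right,
          rule has_bochner_integral_integrable) (use int_x1 in auto)
    subgoal by (rule has_bochner_integral_mult_right, rule has_bochner_integral_sum,
          rule has_bochner_integral_integrable) (use int_b1 in auto)
    subgoal by (rule has_bochner_integral_mult_right, rule has_bochner_integral_sum,
          rule has_bochner_integral_integrable) (use int_b2 in auto)
    subgoal by (rule has_bochner_integral_mult_right, rule has_bochner_integral_sum,
          rule has_bochner_integral_integrable) (use int_b3 in auto)
    done
  finally show ?thesis .
qed

end
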